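(* Let $m\ge3$ and $\alpha\in[0,1]$. Every randomized social choice rule on $m$ candidates which, on every profile, places positive probability only on candidates $a$ whose integral domination graph $G(a)$ admits a perfect matching or which have $\mathrm{plu}(a)>0$, has distortion at least $2+\alpha-2/(m-2)$ on $\alpha$-decisive metric spaces.
   Context: An election: voters $V=\{1,\dots,n\}$, a fixed finite set $C$ of $m$ candidates, a profile $\sigma$ of linear orders over $C$; $a\succeq_i c$ means $a=c$ or $i$ ranks $a$ above $c$; $\mathrm{top}(i)$ is $i$'s first choice; $\mathrm{plu}(a)=|\{i:\mathrm{top}(i)=a\}|$. The integral domination graph $G(a)$ is the bipartite graph with both sides copies of $V$ and edge $(i,j)$ iff $a\succeq_i\mathrm{top}(j)$ (these are exactly the candidates that the rule \textsc{PluralityMatching} may return). A distance function $d$ on $V\cup C$ is nonnegative, symmetric and satisfies the triangle inequality (co-location allowed); consistent with $\sigma$ if $d(i,c)\le d(i,c')$ whenever $i$ ranks $c$ above $c'$; $\alpha$-decisive if $d(i,\mathrm{top}(i))\le\alpha\,d(i,c)$ for all $i$ and $c\ne\mathrm{top}(i)$. $\mathrm{SC}(c)=\sum_i d(i,c)$. The distortion of a randomized rule on $\alpha$-decisive spaces is $\sup_\sigma\sup_d\mathbb{E}[\mathrm{SC}(f(\sigma))]/\min_c\mathrm{SC}(c)$ over $\alpha$-decisive consistent $d$. *)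

theory Defs
  imports "HOL-Probability.Probability"
begin

text \<open>A profile is a list of rankings; voter i (i < length P) has ranking P ! i,
  a list of all candidates (of the finite type 'c) without repetition,
  most preferred first.\<close>

definition is_ranking :: "'c::finite list \<Rightarrow> bool" where
  "is_ranking r \<longleftrightarrow> distinct r \<and> set r = UNIV"

definition valid_profile :: "'c::finite list list \<Rightarrow> bool" where
  "valid_profile P \<longleftrightarrow> length P \<ge> 1 \<and> (\<forall>r\<in>set P. is_ranking r)"

definition ranks_above :: "'c list list \<Rightarrow> nat \<Rightarrow> 'c \<Rightarrow> 'c \<Rightarrow> bool" where
  "ranks_above P i a c \<longleftrightarrow>
     (\<exists>k l. k < l \<and> l < length (P ! i) \<and> (P ! i) ! k = a \<and> (P ! i) ! l = c)"

definition weakly_prefers :: "'c list list \<Rightarrow> nat \<Rightarrow> 'c \<Rightarrow> 'c \<Rightarrow> bool" where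
  "weakly_prefers P i a c \<longleftrightarrow> a = c \<or> ranks_above P i a c"

definition top :: "'c list list \<Rightarrow> nat \<Rightarrow> 'c" where
  "top P i = hd (P ! i)"

definition plu :: "'c list list \<Rightarrow> 'c \<Rightarrow> nat" where
  "plu P a = card {i. i < length P \<and> top P i = a}"

text \<open>Integral domination graph G(a): bipartite, both sides copies of the voters,
  edge (i,j) iff a \<succeq>_i top(j).\<close>
definition dom_edge :: "'c list list \<Rightarrow> 'c \<Rightarrow> nat \<Rightarrow> nat \<Rightarrow> bool" where
  "dom_edge P a i j \<longleftrightarrow> weakly_prefers P i a (top P j)"

definition has_perfect_matching :: "'c list list \<Rightarrow> 'c \<Rightarrow> bool" where
  "has_perfect_matching P a \<longleftrightarrow>
     (\<exists>\<pi>. bij_betw \<pi> {..<length P} {..<length P} \<and> (\<forall>i<length P. dom_edge P a i (\<pi> i)))"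

text \<open>Points of the space: voters Inl i, candidates Inr c.\<close>
definition is_distance :: "nat \<Rightarrow> (nat + 'c \<Rightarrow> nat + 'c \<Rightarrow> real) \<Rightarrow> bool" where
  "is_distance n d \<longleftrightarrow>
     (let S = Inl ` {..<n} \<union> range Inr in
      (\<forall>x\<in>S. d x x = 0) \<and>
      (\<forall>x\<in>S. \<forall>y\<in>S. d x y \<ge> 0 \<and> d x y = d y x) \<and>
      (\<forall>x\<in>S. \<forall>y\<in>S. \<forall>z\<in>S. d x z \<le> d x y + d y z))"

definition consistent :: "'c list list \<Rightarrow> (nat + 'c \<Rightarrow> nat + 'c \<Rightarrow> real) \<Rightarrow> bool" where
  "consistent P d \<longleftrightarrow>
     (\<forall>i<length P. \<forall>c c'. ranks_above P i c c' \<longrightarrow> d (Inl i) (Inr c) \<le> d (Inl i) (Inr c'))"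

definition decisive :: "real \<Rightarrow> 'c list list \<Rightarrow> (nat + 'c \<Rightarrow> nat + 'c \<Rightarrow> real) \<Rightarrow> bool" where
  "decisive \<alpha> P d \<longleftrightarrow>
     (\<forall>i<length P. \<forall>c. c \<noteq> top P i \<longrightarrow> d (Inl i) (Inr (top P i)) \<le> \<alpha> * d (Inl i) (Inr c))"

definition SC :: "'c list list \<Rightarrow> (nat + 'c \<Rightarrow> nat + 'c \<Rightarrow> real) \<Rightarrow> 'c \<Rightarrow> real" where
  "SC P d c = (\<Sum>i<length P. d (Inl i) (Inr c))"

text \<open>Distortion of a randomized rule on \<alpha>-decisive spaces (as an extended real;
  the ratio uses Isabelle's convention x / 0 = 0).\<close>
definition distortion :: "real \<Rightarrow> ('c::finite list list \<Rightarrow> 'c pmf) \<Rightarrow> ereal" where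
  "distortion \<alpha> f =
     (SUP (P, d) \<in> {(P, d). valid_profile P \<and> is_distance (length P) d \<and> consistent P d \<and> decisive \<alpha> P d}.
        ereal (measure_pmf.expectation (f P) (SC P d) / Min (range (SC P d))))"

end

theory Submission
  imports Defs
begin

datatype 'c loc = LB | LW | LP 'c | LC 'c

fun ldist :: "real \<Rightarrow> 'c loc \<Rightarrow> 'c loc \<Rightarrow> real" where
  "ldist a LW LW = 0"
| "ldist a LW _ = 3"
| "ldist a _ LW = 3"
| "ldist a LB LB = 0"
| "ldist a LB (LP c) = 1"
| "ldist a (LP c) LB = 1"
| "ldist a LB (LC c) = 1 + a"
| "ldist a (LC c) LB = 1 + a"
| "ldist a (LP c) (LP c') = (if c = c' then 0 else 2)"
| "ldist a (LC c) (LC c') = (if c = c' then 0 else 2 + 2*a)"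
| "ldist a (LP c) (LC c') = (if c = c' then a else 2 + a)"
| "ldist a (LC c) (LP c') = (if c = c' then a else 2 + a)"

lemma ldist_refl: "ldist a x x = 0"
  by (cases x) auto

lemma ldist_sym: "ldist a x y = ldist a y x"
  by (cases x; cases y) auto

lemma ldist_nonneg: "0 \<le> a \<Longrightarrow> 0 \<le> ldist a x y"
  by (cases x; cases y) auto

lemma ldist_tri: "0 \<le> a \<Longrightarrow> a \<le> 1 \<Longrightarrow> ldist a x z \<le> ldist a x y + ldist a y z"
  by (cases x; cases y; cases z) auto

lemma sum_mod_group:
  fixes h :: "nat \<Rightarrow> real"
  shows "(\<Sum>j<k*N. h (j mod k)) = real N * (\<Sum>j<k. h j)"
proof (induction N)
  case 0 then show ?case by simp
next
  case (Suc N)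
  have "{..<k * Suc N} = {..<k*N} \<union> {k*N..<k*N+k}" by auto
  then have "(\<Sum>j<k*Suc N. h (j mod k)) = (\<Sum>j<k*N. h (j mod k)) + (\<Sum>j\<in>{k*N..<k*N+k}. h (j mod k))"
    by (simp add: sum.union_disjoint ivl_disj_int_one(2))
  also have "(\<Sum>j\<in>{k*N..<k*N+k}. h (j mod k)) = (\<Sum>j<k. h j)"
  proof -
    have "(\<Sum>j\<in>{k*N..<k*N+k}. h (j mod k)) = (\<Sum>j\<in>{0..<k}. h ((j + k*N) mod k))"
      using sum.shift_bounds_nat_ivl[of "\<lambda>j. h (j mod k)" 0 "k*N" k] by (simp add: add.commute)
    also have "\<dots> = (\<Sum>j\<in>{0..<k}. h j)" by (rule sum.cong) auto
    finally show ?thesis by (simp add: atLeast0LessThan)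
  qed
  finally show ?case using Suc by (simp add: algebra_simps)
qed

lemma sum_nth_set:
  fixes h :: "'a \<Rightarrow> real"
  assumes "distinct cs"
  shows "(\<Sum>j<length cs. h (cs ! j)) = (\<Sum>c\<in>set cs. h c)"
  using assms by (simp add: sum.distinct_set_conv_list sum_list_sum_nth atLeast0LessThan)


definition grp :: "'c \<Rightarrow> 'c \<Rightarrow> 'c list \<Rightarrow> 'c \<Rightarrow> 'c list" where
  "grp b w cs c = c # b # filter (\<lambda>x. x \<noteq> c) cs @ [w]"

definition prof :: "'c \<Rightarrow> 'c \<Rightarrow> 'c list \<Rightarrow> nat \<Rightarrow> 'c list list" where
  "prof b w cs N = (w # cs @ [b]) # map (\<lambda>i. grp b w cs (cs ! (i mod length cs))) [0..<length cs * N]"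

definition locv :: "'c \<Rightarrow> 'c \<Rightarrow> 'c list \<Rightarrow> nat + 'c \<Rightarrow> 'c loc" where
  "locv b w cs x = (case x of Inl i \<Rightarrow> (if i = 0 then LW else LP (cs ! ((i - 1) mod length cs)))
     | Inr y \<Rightarrow> (if y = b then LB else if y = w then LW else LC y))"

locale constr =
  fixes b w :: "'c::finite" and cs :: "'c list" and \<alpha> :: real and N :: nat
  assumes bw: "b \<noteq> w" and dcs: "distinct cs" and scs: "set cs = UNIV - {b,w}"
    and ne: "cs \<noteq> []" and a0: "0 \<le> \<alpha>" and a1: "\<alpha> \<le> 1" and N1: "N \<ge> 1"
begin

abbreviation "P \<equiv> prof b w cs N"
abbreviation "d \<equiv> (\<lambda>x y. ldist \<alpha> (locv b w cs x) (locv b w cs y))"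

lemma len_P: "length P = Suc (length cs * N)"
  by (simp add: prof_def)

lemma P0: "P ! 0 = w # cs @ [b]"
  by (simp add: prof_def)

lemma PS: "j < length cs * N \<Longrightarrow> P ! Suc j = grp b w cs (cs ! (j mod length cs))"
  by (simp add: prof_def)

lemma cs_in: "cs ! (j mod length cs) \<in> set cs"
  using ne by simp

lemma grp_ranking: "c \<in> set cs \<Longrightarrow> is_ranking (grp b w cs c)"
  using bw dcs scs unfolding is_ranking_def grp_def by auto

lemma v0_ranking: "is_ranking (w # cs @ [b])"
  using bw dcs scs unfolding is_ranking_def by auto

lemma valid: "valid_profile P"
  unfolding valid_profile_def
proof
  show "1 \<le> length P" by (simp add: len_P)
  show "\<forall>r\<in>set P. is_ranking r"
    using v0_ranking grp_ranking cs_in by (auto simp: prof_def)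
qed

lemma is_dist: "is_distance n d"
  unfolding is_distance_def Let_def
  using ldist_refl ldist_sym ldist_nonneg[OF a0] ldist_tri[OF a0 a1] by blast

lemma top0: "top P 0 = w"
  by (simp add: top_def P0)

lemma topS: "j < length cs * N \<Longrightarrow> top P (Suc j) = cs ! (j mod length cs)"
  by (simp add: top_def PS grp_def)

lemma top_ne_b: "i < length P \<Longrightarrow> top P i \<noteq> b"
proof (cases i)
  case 0 then show ?thesis using top0 bw by auto
next
  case (Suc j)
  assume "i < length P"
  then have "j < length cs * N" using Suc len_P by simp
  then show ?thesis using Suc topS cs_in scs by force
qed

lemma plu_b: "plu P b = 0"
  unfolding plu_def using top_ne_b by simp

lemma no_pm: "\<not> has_perfect_matching P b"
proof
  assume "has_perfect_matching P b"
  then obtain \<pi> where bij: "bij_betw \<pi> {..<length P} {..<length P}"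
    and e: "\<forall>i<length P. dom_edge P b i (\<pi> i)"
    unfolding has_perfect_matching_def by blast
  have "\<pi> 0 < length P" using bij len_P bij_betwE by fastforce
  then have tb: "top P (\<pi> 0) \<noteq> b" using top_ne_b by blast
  have "dom_edge P b 0 (\<pi> 0)" using e len_P by simp
  then have "ranks_above P 0 b (top P (\<pi> 0))"
    using tb unfolding dom_edge_def weakly_prefers_def by auto
  then obtain k l where kl: "k < l" "l < length (P ! 0)" "(P ! 0) ! k = b"
    unfolding ranks_above_def by blast
  let ?r = "w # cs @ [b]"
  have dr: "distinct ?r" using v0_ranking is_ranking_def by blast
  have "?r ! (length ?r - 1) = b" by (simp add: nth_append)
  then have "k = length ?r - 1"
    using kl P0 dr nth_eq_iff_index_eq[of ?r k "length ?r - 1"] by auto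
  then show False using kl P0 by simp
qed


lemma locv_w: "locv b w cs (Inr w) = LW" using bw by (simp add: locv_def)
lemma locv_b: "locv b w cs (Inr b) = LB" by (simp add: locv_def)
lemma locv_c: "x \<in> set cs \<Longrightarrow> locv b w cs (Inr x) = LC x" using scs by (auto simp: locv_def)
lemma locv_0: "locv b w cs (Inl 0) = LW" by (simp add: locv_def)
lemma locv_S: "locv b w cs (Inl (Suc j)) = LP (cs ! (j mod length cs))" by (simp add: locv_def)

lemma map_const_repl: "(\<forall>x\<in>set xs. f x = v) \<Longrightarrow> map f xs = replicate (length xs) v"
  by (induction xs) auto

lemma sorted_v0: "sorted (map (\<lambda>x. d (Inl 0) (Inr x)) (w # cs @ [b]))"
proof -
  have "map (\<lambda>x. d (Inl 0) (Inr x)) cs = replicate (length cs) 3"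
    by (rule map_const_repl) (auto simp: locv_c locv_0)
  then show ?thesis by (simp add: locv_w locv_0 locv_b sorted_append)
qed

lemma sorted_grp: "c = cs ! (j mod length cs) \<Longrightarrow>
   sorted (map (\<lambda>x. d (Inl (Suc j)) (Inr x)) (grp b w cs c))"
proof -
  assume c: "c = cs ! (j mod length cs)"
  then have cin: "c \<in> set cs" using cs_in by simp
  have "map (\<lambda>x. d (Inl (Suc j)) (Inr x)) (filter (\<lambda>x. x \<noteq> c) cs) = replicate (length (filter (\<lambda>x. x \<noteq> c) cs)) (2 + \<alpha>)"
    by (rule map_const_repl) (auto simp: locv_c locv_S c)
  then show ?thesis using a0 a1 cin by (simp add: grp_def locv_w locv_S locv_b locv_c c[symmetric] sorted_append)
qed

lemma sorted_ranks: "sorted (map f r) \<Longrightarrow> k < l \<Longrightarrow> l < length r \<Longrightarrow> f (r ! k) \<le> f (r ! l)"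
  using sorted_nth_mono[of "map f r" k l] by simp

lemma consistent: "consistent P d"
  unfolding consistent_def
proof (intro allI impI)
  fix i c c' assume i: "i < length P" and ra: "ranks_above P i c c'"
  then obtain k l where kl: "k < l" "l < length (P ! i)" "(P ! i) ! k = c" "(P ! i) ! l = c'"
    unfolding ranks_above_def by blast
  have "sorted (map (\<lambda>x. d (Inl i) (Inr x)) (P ! i))"
  proof (cases i)
    case 0 then show ?thesis using sorted_v0 P0 by simp
  next
    case (Suc j)
    then have "j < length cs * N" using i len_P by simp
    then show ?thesis using Suc PS sorted_grp by simp
  qed
  then show "d (Inl i) (Inr c) \<le> d (Inl i) (Inr c')"
    using sorted_ranks[OF _ kl(1,2)] kl(3,4) by blast
qed

lemma ldist_ge1: "x \<noteq> LC c \<Longrightarrow> x \<noteq> LP c \<Longrightarrow> 1 \<le> ldist \<alpha> (LP c) x"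
  using a0 by (cases x) auto

lemma decisive: "decisive \<alpha> P d"
  unfolding decisive_def
proof (intro allI impI)
  fix i c assume i: "i < length P" and c: "c \<noteq> top P i"
  show "d (Inl i) (Inr (top P i)) \<le> \<alpha> * d (Inl i) (Inr c)"
  proof (cases i)
    case 0 then show ?thesis by (simp add: top0 locv_0 locv_w) (intro mult_nonneg_nonneg a0 ldist_nonneg)
  next
    case (Suc j)
    then have j: "j < length cs * N" using i len_P by simp
    let ?c = "cs ! (j mod length cs)"
    have t: "top P i = ?c" using Suc topS j by simp
    have cin: "?c \<in> set cs" using cs_in by simp
    have "locv b w cs (Inr c) \<noteq> LC ?c" "locv b w cs (Inr c) \<noteq> LP ?c"
      using c t scs by (auto simp: locv_def)
    then have "1 \<le> ldist \<alpha> (LP ?c) (locv b w cs (Inr c))" by (rule ldist_ge1)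
    then have "\<alpha> \<le> \<alpha> * ldist \<alpha> (LP ?c) (locv b w cs (Inr c))"
      using a0 by (simp add: mult_le_cancel_left1)
    then show ?thesis using Suc t locv_S locv_c[OF cin] by simp
  qed
qed

lemma SC_formula: "SC P d x = ldist \<alpha> LW (locv b w cs (Inr x)) +
   real N * (\<Sum>c\<in>set cs. ldist \<alpha> (LP c) (locv b w cs (Inr x)))"
proof -
  have "SC P d x = (\<Sum>i<Suc (length cs * N). d (Inl i) (Inr x))"
    by (simp add: SC_def len_P)
  also have "\<dots> = d (Inl 0) (Inr x) + (\<Sum>j<length cs * N. d (Inl (Suc j)) (Inr x))"
    by (rule sum.lessThan_Suc_shift)
  also have "(\<Sum>j<length cs * N. d (Inl (Suc j)) (Inr x)) =
      (\<Sum>j<length cs * N. (\<lambda>m. ldist \<alpha> (LP (cs ! m)) (locv b w cs (Inr x))) (j mod length cs))"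
    by (simp add: locv_S)
  also have "\<dots> = real N * (\<Sum>m<length cs. ldist \<alpha> (LP (cs ! m)) (locv b w cs (Inr x)))"
    by (rule sum_mod_group)
  also have "(\<Sum>m<length cs. ldist \<alpha> (LP (cs ! m)) (locv b w cs (Inr x))) =
      (\<Sum>c\<in>set cs. ldist \<alpha> (LP c) (locv b w cs (Inr x)))"
    by (rule sum_nth_set[OF dcs])
  finally show ?thesis by (simp add: locv_0)
qed

lemma len_cs: "length cs = card (set cs)"
  using dcs by (simp add: distinct_card)

lemma SC_b: "SC P d b = 3 + real N * real (length cs)"
  using SC_formula[of b] by (simp add: locv_b len_cs)

lemma SC_w: "SC P d w = real N * (3 * real (length cs))"
  using SC_formula[of w] by (simp add: locv_w len_cs)

lemma SC_c: assumes x: "x \<in> set cs"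
  shows "SC P d x = 3 + real N * (\<alpha> + (real (length cs) - 1) * (2 + \<alpha>))"
proof -
  have "(\<Sum>c\<in>set cs. ldist \<alpha> (LP c) (LC x)) = ldist \<alpha> (LP x) (LC x) + (\<Sum>c\<in>set cs - {x}. ldist \<alpha> (LP c) (LC x))"
    using x by (simp add: sum.remove)
  also have "(\<Sum>c\<in>set cs - {x}. ldist \<alpha> (LP c) (LC x)) = (\<Sum>c\<in>set cs - {x}. 2 + \<alpha>)"
    by (rule sum.cong) auto
  also have "\<dots> = (real (length cs) - 1) * (2 + \<alpha>)"
  proof -
    have c1: "card (set cs - {x}) = length cs - 1" using x dcs by (simp add: distinct_card)
    have "length cs \<ge> 1" using x by (cases cs) auto
    then have "real (length cs - 1) = real (length cs) - 1" by (simp add: of_nat_diff)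
    then show ?thesis using c1 by simp
  qed
  finally show ?thesis using SC_formula[of x] locv_c[OF x] x by (simp add: locv_def)
qed

lemma SC_bound:
  assumes "a \<noteq> b"
  shows "SC P d a \<ge> (2 + \<alpha> - 2 / real (length cs)) * (3 + real N * real (length cs)) - 9"
proof -
  define k where "k = real (length cs)"
  define B where "B = 2 + \<alpha> - 2 / k"
  have k1: "k \<ge> 1" using ne by (simp add: k_def Suc_le_eq)
  have kB: "k * B = k * (2 + \<alpha>) - 2" using k1 by (simp add: B_def algebra_simps)
  have "0 \<le> 2 / k" using k1 by simp
  then have B3: "B \<le> 3" using a1 unfolding B_def by linarith
  have N0: "real N \<ge> 0" by simp
  show ?thesis
  proof (cases "a = w")
    case True
    have "B * (3 + real N * k) - 9 \<le> 3 * (3 + real N * k) - 9"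
      using B3 N0 k1 by (intro diff_right_mono mult_right_mono) auto
    then show ?thesis using True SC_w by (simp add: B_def k_def algebra_simps)
  next
    case False
    then have "a \<in> set cs" using assms scs by auto
    then have e1: "SC P d a = 3 + real N * (\<alpha> + (k - 1) * (2 + \<alpha>))"
      using SC_c k_def by simp
    have "\<alpha> + (k - 1) * (2 + \<alpha>) = k * B" using kB by (simp add: algebra_simps)
    then have e2: "SC P d a = 3 + real N * (k * B)" using e1 by simp
    have e3: "B * (3 + real N * k) - 9 = 3 * B + real N * (k * B) - 9" by (simp add: algebra_simps)
    have "SC P d a \<ge> B * (3 + real N * k) - 9" using e2 e3 B3 by linarith
    then show ?thesis by (simp add: B_def k_def)
  qed
qed

lemma SC_nonneg: "0 \<le> SC P d x"
  unfolding SC_def by (intro sum_nonneg ldist_nonneg[OF a0])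

lemma SC_pos: "0 < SC P d x"
proof (cases "x = w")
  case True
  have "length cs \<ge> 1" using ne by (cases cs) auto
  then have "0 < real N * (3 * real (length cs))" using N1 by (intro mult_pos_pos) auto
  then show ?thesis using True SC_w by simp
next
  case False
  then have "locv b w cs (Inr x) \<noteq> LW" using bw by (auto simp: locv_def)
  then have "ldist \<alpha> LW (locv b w cs (Inr x)) = 3" by (cases "locv b w cs (Inr x)") auto
  moreover have "0 \<le> real N * (\<Sum>c\<in>set cs. ldist \<alpha> (LP c) (locv b w cs (Inr x)))"
    by (intro mult_nonneg_nonneg sum_nonneg ldist_nonneg[OF a0]) auto
  ultimately show ?thesis using SC_formula[of x] by simp
qed

lemma ratio:
  fixes p :: "'c pmf"
  assumes nb: "\<forall>a\<in>set_pmf p. a \<noteq> b"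
  shows "measure_pmf.expectation p (SC P d) / Min (range (SC P d)) \<ge>
     (2 + \<alpha> - 2 / real (length cs)) - 9 / (3 + real N * real (length cs))"
proof -
  define B where "B = 2 + \<alpha> - 2 / real (length cs)"
  define S where "S = 3 + real N * real (length cs)"
  define E where "E = measure_pmf.expectation p (SC P d)"
  define M where "M = Min (range (SC P d))"
  have S0: "S > 0" by (simp add: S_def add_pos_nonneg)
  have int: "integrable (measure_pmf p) (SC P d)"
    by (rule integrable_measure_pmf_finite) simp
  have E1: "B * S - 9 \<le> E"
  proof -
    have "\<forall>a\<in>set_pmf p. B * S - 9 \<le> SC P d a"
    proof
      fix a assume "a \<in> set_pmf p"
      then have "a \<noteq> b" using nb by blast
      from SC_bound[OF this] show "B * S - 9 \<le> SC P d a" unfolding B_def S_def .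
    qed
    then have "AE a in measure_pmf p. B * S - 9 \<le> SC P d a" by (rule AE_measure_pmf_iff[THEN iffD2])
    then show ?thesis unfolding E_def by (rule measure_pmf.integral_ge_const[OF int])
  qed
  have E0: "0 \<le> E"
    unfolding E_def
    by (rule measure_pmf.integral_ge_const[OF int]) (rule AE_I2, rule SC_nonneg)
  have "M \<in> range (SC P d)" unfolding M_def by (rule Min_in) simp_all
  then have M0: "M > 0" using SC_pos by auto
  have "M \<le> SC P d b" unfolding M_def by (rule Min_le) simp_all
  then have MS: "M \<le> S" using SC_b S_def by simp
  have "E / S \<le> E / M" using E0 M0 MS by (simp add: divide_left_mono)
  moreover have "B - 9 / S \<le> E / S"
  proof -
    have "(B * S - 9) / S \<le> E / S" using E1 S0 by (intro divide_right_mono) simp_all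
    moreover have "(B * S - 9) / S = B - 9 / S" using S0 by (simp add: diff_divide_distrib)
    ultimately show ?thesis by simp
  qed
  ultimately have "B - 9 / S \<le> E / M" by linarith
  then show ?thesis unfolding B_def[symmetric] S_def[symmetric] E_def[symmetric] M_def[symmetric] .
qed
end


lemma exists_instance:
  fixes f :: "'c::finite list list \<Rightarrow> 'c pmf" and \<alpha> :: real and b w :: 'c and cs :: "'c list"
  assumes "b \<noteq> w" "distinct cs" "set cs = UNIV - {b,w}" "cs \<noteq> []" "0 \<le> \<alpha>" "\<alpha> \<le> 1" "N \<ge> 1"
    and hf: "\<forall>P. valid_profile P \<longrightarrow>
           (\<forall>a \<in> set_pmf (f P). has_perfect_matching P a \<or> plu P a > 0)"
  shows "\<exists>x\<in>{(P, d). valid_profile P \<and> is_distance (length P) d \<and> consistent P d \<and> decisive \<alpha> P d}.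
     (2 + \<alpha> - 2 / real (length cs)) - 9 / (3 + real N * real (length cs)) \<le>
     (case x of (P, d) \<Rightarrow> measure_pmf.expectation (f P) (SC P d) / Min (range (SC P d)))"
proof -
  interpret constr b w cs \<alpha> N
    using assms by unfold_locales auto
  have nb: "\<forall>a\<in>set_pmf (f P). a \<noteq> b"
    using hf valid no_pm plu_b by fastforce
  show ?thesis
    apply (rule bexI[of _ "(P, d)"])
    using ratio[OF nb] valid is_dist consistent decisive by auto
qed

theorem theorem6:
  fixes f :: "'c::finite list list \<Rightarrow> 'c pmf" and \<alpha> :: real
  assumes "CARD('c) \<ge> 3"
    and "0 \<le> \<alpha>" and "\<alpha> \<le> 1"
    and "\<forall>P. valid_profile P \<longrightarrow>
           (\<forall>a \<in> set_pmf (f P). has_perfect_matching P a \<or> plu P a > 0)"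
  shows "distortion \<alpha> f \<ge> ereal (2 + \<alpha> - 2 / (real CARD('c) - 2))"
proof -
  obtain b :: 'c where True by blast
  have "card (UNIV - {b}) \<ge> 2" using assms(1) by (simp add: card_Diff_singleton)
  then have "UNIV - {b} \<noteq> {}" by (metis card.empty not_numeral_le_zero)
  then obtain w where bw: "w \<noteq> b" by blast
  obtain cs where dcs: "distinct cs" and scs: "set cs = UNIV - {b, w}"
    using finite_distinct_list[of "UNIV - {b,w} :: 'c set"] by auto
  have "length cs = card (UNIV - {b, w})" using dcs scs distinct_card by metis
  also have "\<dots> = CARD('c) - 2" using bw by (simp add: card_Diff_subset)
  finally have lcs: "length cs = CARD('c) - 2" .
  then have ne: "cs \<noteq> []" using assms(1) by auto
  have k: "real (length cs) = real CARD('c) - 2" using lcs assms(1) by (simp add: of_nat_diff)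
  define Bd where "Bd = 2 + \<alpha> - 2 / (real CARD('c) - 2)"
  define A where "A = {(P :: 'c list list, d). valid_profile P \<and> is_distance (length P) d \<and> consistent P d \<and> decisive \<alpha> P d}"
  define F where "F = (\<lambda>x. case x of (P, d) \<Rightarrow> measure_pmf.expectation (f P) (SC P d) / Min (range (SC P d)))"
  have inst: "\<exists>x\<in>A. Bd - 9 / (3 + real N * real (length cs)) \<le> F x" if "N \<ge> 1" for N
    using exists_instance[OF bw[symmetric] dcs scs ne assms(2,3) that assms(4)]
    unfolding A_def F_def Bd_def k .
  have dist: "distortion \<alpha> f = (SUP x\<in>A. ereal (F x))"
    unfolding distortion_def A_def F_def by (simp add: case_prod_beta)
  have "ereal Bd \<le> (SUP x\<in>A. ereal (F x))"
    unfolding le_SUP_iff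
  proof (intro allI impI)
    fix y assume y: "y < ereal Bd"
    obtain r where r: "r < Bd" "y \<le> ereal r"
    proof (cases y)
      case (real r) then show ?thesis using that y by auto
    next
      case PInf then show ?thesis using y by auto
    next
      case MInf then show ?thesis using that[of "Bd - 1"] by auto
    qed
    obtain n :: nat where n: "9 / (Bd - r) < real n" using reals_Archimedean2 by blast
    define N where "N = Suc n"
    have lk: "real (length cs) \<ge> 1" using ne by (cases cs) auto
    have "real N * 1 \<le> real N * real (length cs)" using lk by (intro mult_left_mono) auto
    moreover have "real N = real n + 1" by (simp add: N_def)
    ultimately have "9 / (Bd - r) < 3 + real N * real (length cs)" using n by linarith
    then have "9 < (Bd - r) * (3 + real N * real (length cs))" using r(1) by (simp add: field_simps)
    moreover have S0: "0 < 3 + real N * real (length cs)" by (simp add: add_pos_nonneg)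
    ultimately have lt: "9 / (3 + real N * real (length cs)) < Bd - r"
      by (simp add: pos_divide_less_eq)
    obtain x where x: "x \<in> A" "Bd - 9 / (3 + real N * real (length cs)) \<le> F x"
      using inst[of N] N_def by auto
    have "r < F x" using x lt by linarith
    then have "ereal r < ereal (F x)" by simp
    then have "y < ereal (F x)" by (rule le_less_trans[OF r(2)])
    then show "\<exists>i\<in>A. y < ereal (F i)" using x(1) by blast
  qed
  then show ?thesis unfolding dist Bd_def .
qed

end
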